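(* Let $Q\in\mathbb N$ and $k\in\mathbb N_0\cap[0,2Q-1]$. Then $\|1\|_{k,Q}=\frac{T^k}{k!}$, where $1$ denotes the constant function $[0,T]\times\mathbb R^d\ni(t,x)\mapsto1$.
   Context: $T\in(0,\infty)$, $d\in\mathbb N$, $(\Omega,\mathcal F,\mathbb P)$ a probability space and $W^0\colon[0,T]\times\Omega\to\mathbb R^d$ a standard Brownian motion. Gauss–Legendre weights: for $n\in\mathbb N$ let $c^n_1,\dots,c^n_n$ be the roots of $x\mapsto\frac{1}{2^nn!}\frac{d^n}{dx^n}[(x^2-1)^n]$; for $a\le b$ let $q^{n,[a,b]}(t)=\int_a^b\prod_{i:\,c^n_i\neq\frac{2t-(a+b)}{b-a}}\frac{2x-(b-a)c^n_i-(a+b)}{2t-(b-a)c^n_i-(a+b)}\,dx$ if $a<b$ and $\frac{2t-(a+b)}{b-a}\in\{c^n_1,\dots,c^n_n\}$, else $0$; sums $\sum_{t\in[a,b]}$ range over the finitely many points with nonzero weight. For $Q\in\mathbb N$: $\bar q^{0,Q}=\mathbb 1_{\{0\}}$, $\bar q^{n,Q}(t)=\sum_{s\in[0,t]}\bar q^{n-1,Q}(s)q^{Q,[s,T]}(t)$. Semi-norm: $\|V\|_{k,Q}=\sum_{t\in[0,T]}\bar q^{k,Q}(t)\sup_{s\in[t,T]}\sup_{u\in[0,s]}\sup_{z\in\mathbb R^d}(\mathbb E[|V(s,z+W^0_u)|^2])^{1/2}$. *)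

theory Defs
  imports "HOL-Probability.Probability" "HOL-Computational_Algebra.Polynomial"
begin

definition std_gauss_vec_density :: "real \<Rightarrow> real ^ 'd \<Rightarrow> real" where
  "std_gauss_vec_density \<sigma> x = (\<Prod>i\<in>UNIV. normal_density 0 \<sigma> (x $ i))"

definition std_brownian_motion ::
  "'a measure \<Rightarrow> real \<Rightarrow> (real \<Rightarrow> 'a \<Rightarrow> real ^ 'd) \<Rightarrow> bool" where
  "std_brownian_motion M T W \<longleftrightarrow>
     (\<forall>t\<in>{0..T}. W t \<in> borel_measurable M) \<and>
     (\<forall>\<omega>\<in>space M. W 0 \<omega> = 0) \<and>
     (\<forall>\<omega>\<in>space M. continuous_on {0..T} (\<lambda>t. W t \<omega>)) \<and>
     (\<forall>s t. 0 \<le> s \<and> s < t \<and> t \<le> T \<longrightarrow>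
        distributed M lborel (\<lambda>\<omega>. W t \<omega> - W s \<omega>) (std_gauss_vec_density (sqrt (t - s)))) \<and>
     (\<forall>(n::nat) (tt::nat \<Rightarrow> real). 0 \<le> tt 0 \<and> tt n \<le> T \<and> (\<forall>j<n. tt j < tt (Suc j)) \<longrightarrow>
        prob_space.indep_vars M (\<lambda>_. borel) (\<lambda>j \<omega>. W (tt (Suc j)) \<omega> - W (tt j) \<omega>) {..<n})"

definition legendre_poly :: "nat \<Rightarrow> real poly" where
  "legendre_poly n = smult (1 / (2 ^ n * fact n)) ((pderiv ^^ n) ([:-1, 0, 1:] ^ n))"

definition gl_nodes :: "nat \<Rightarrow> real set" where
  "gl_nodes n = {x. poly (legendre_poly n) x = 0}"

definition gl_weight :: "nat \<Rightarrow> real \<Rightarrow> real \<Rightarrow> real \<Rightarrow> real" where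
  "gl_weight n a b t =
     (let \<xi> = (2 * t - (a + b)) / (b - a) in
      if a < b \<and> \<xi> \<in> gl_nodes n then
        integral {a..b} (\<lambda>x. \<Prod>c\<in>gl_nodes n - {\<xi>}.
           (2 * x - (b - a) * c - (a + b)) / (2 * t - (b - a) * c - (a + b)))
      else 0)"

definition supp_sum :: "real set \<Rightarrow> (real \<Rightarrow> 'b::comm_monoid_add) \<Rightarrow> 'b" where
  "supp_sum S f = sum f {x\<in>S. f x \<noteq> 0}"

fun qbar :: "real \<Rightarrow> nat \<Rightarrow> nat \<Rightarrow> real \<Rightarrow> real" where
  "qbar T Q 0 t = (if t = 0 then 1 else 0)"
| "qbar T Q (Suc n) t = supp_sum {0..t} (\<lambda>s. qbar T Q n s * gl_weight Q s T t)"

definition sqrt_ennreal :: "ennreal \<Rightarrow> ennreal" where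
  "sqrt_ennreal e = (if e = \<top> then \<top> else ennreal (sqrt (enn2real e)))"

definition L2_sup :: "'a measure \<Rightarrow> (real \<Rightarrow> 'a \<Rightarrow> real ^ 'd) \<Rightarrow> real
    \<Rightarrow> (real \<Rightarrow> real ^ 'd \<Rightarrow> real) \<Rightarrow> real \<Rightarrow> ennreal" where
  "L2_sup M W T V t =
     (SUP s\<in>{t..T}. SUP u\<in>{0..s}. SUP z\<in>(UNIV :: (real ^ 'd) set).
        sqrt_ennreal (\<integral>\<^sup>+ \<omega>. ennreal ((V s (z + W u \<omega>))\<^sup>2) \<partial>M))"

definition gl_seminorm :: "'a measure \<Rightarrow> (real \<Rightarrow> 'a \<Rightarrow> real ^ 'd) \<Rightarrow> real \<Rightarrow> nat \<Rightarrow> nat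
    \<Rightarrow> (real \<Rightarrow> real ^ 'd \<Rightarrow> real) \<Rightarrow> ereal" where
  "gl_seminorm M W T k Q V =
     supp_sum {0..T} (\<lambda>t. ereal (qbar T Q k t) * enn2ereal (L2_sup M W T V t))"

end

theory Submission
  imports Defs
begin


lemma pderiv_sum': "pderiv (sum f S) = (\<Sum>i\<in>S. pderiv (f i))"
  by (induction S rule: infinite_finite_induct) (simp_all add: pderiv_add)

lemma pint_ex: "\<exists>F::real poly. pderiv F = p"
proof -
  define F where "F = (\<Sum>i\<le>degree p. monom (coeff p i / real (Suc i)) (Suc i))"
  have "pderiv F = (\<Sum>i\<le>degree p. pderiv (monom (coeff p i / real (Suc i)) (Suc i)))"
    unfolding F_def by (rule pderiv_sum')
  also have "\<dots> = (\<Sum>i\<le>degree p. monom (coeff p i) i)"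
    by (simp add: pderiv_monom del: of_nat_Suc)
  finally show ?thesis using poly_as_sum_of_monoms by metis
qed

lemma poly_integral:
  fixes F :: "real poly"
  assumes "a \<le> b"
  shows "integral {a..b} (poly (pderiv F)) = poly F b - poly F a"
proof -
  have "(poly (pderiv F) has_integral (poly F b - poly F a)) {a..b}"
    apply (rule fundamental_theorem_of_calculus[OF assms])
    by (metis has_real_derivative_iff_has_vector_derivative has_field_derivative_at_within poly_DERIV)
  then show ?thesis by (rule integral_unique)
qed

lemma poly_integrable: "(poly (p::real poly)) integrable_on {a..b}"
  by (rule integrable_continuous_interval) (auto intro: continuous_intros)

lemma poly_integral_add: "integral {a..b} (poly (p + q)) = integral {a..b} (poly p) + integral {a..b} (poly (q::real poly))"
proof -
  have "integral {a..b} (poly (p + q)) = integral {a..b} (\<lambda>x. poly p x + poly q x)"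
    by (metis poly_add)
  also have "\<dots> = integral {a..b} (poly p) + integral {a..b} (poly q)"
    by (rule integral_add[OF poly_integrable poly_integrable])
  finally show ?thesis .
qed

lemma by_parts:
  fixes f g :: "real poly"
  assumes "a \<le> b"
  shows "integral {a..b} (poly (pderiv f * g)) = poly (f*g) b - poly (f*g) a - integral {a..b} (poly (f * pderiv g))"
proof -
  have "integral {a..b} (poly (pderiv (f*g))) = poly (f*g) b - poly (f*g) a"
    by (rule poly_integral[OF assms])
  moreover have "pderiv (f*g) = pderiv f * g + f * pderiv g" by (simp add: pderiv_mult algebra_simps)
  ultimately show ?thesis using poly_integral_add by (metis add_diff_cancel_right')
qed





lemma poly_rolle:
  fixes p :: "real poly"
  assumes "a < b" "poly p a = poly p b"
  shows "\<exists>z. a < z \<and> z < b \<and> poly (pderiv p) z = 0"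
proof -
  have "\<exists>z. a < z \<and> z < b \<and> (\<lambda>v. poly (pderiv p) z * v) = (\<lambda>v. 0)"
    apply (rule Rolle_deriv[OF assms])
     apply (auto intro: continuous_intros)
    by (metis has_field_derivative_imp_has_derivative poly_DERIV)
  then show ?thesis by (metis mult.right_neutral)
qed

lemma dvd_pderiv_lin:
  fixes p :: "real poly"
  assumes "[:-a,1:]^(Suc m) dvd p"
  shows "[:-a,1:]^m dvd pderiv p"
proof -
  obtain r where r: "p = [:-a,1:]^(Suc m) * r" using assms by (auto elim: dvdE)
  have "pderiv p = [:-a,1:]^m * ([:-a,1:] * pderiv r + smult (of_nat (Suc m)) r)"
    unfolding r pderiv_mult pderiv_power_Suc by (simp add: pderiv_pCons algebra_simps)
  then show ?thesis by simp
qed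

lemma dvd_hpderiv_lin:
  fixes p :: "real poly"
  assumes "j \<le> n" "[:-a,1:]^n dvd p"
  shows "[:-a,1:]^(n-j) dvd (pderiv^^j) p"
  using assms
proof (induction j)
  case 0 then show ?case by simp
next
  case (Suc j)
  then have "[:-a,1:]^(Suc (n - Suc j)) dvd (pderiv^^j) p"
    by (metis Suc_diff_Suc Suc_leD Suc_le_lessD)
  then show ?case using dvd_pderiv_lin by simp
qed

definition LU :: "nat \<Rightarrow> real poly" where "LU Q = [:-1, 0, 1:] ^ Q"
definition LR :: "nat \<Rightarrow> nat \<Rightarrow> real poly" where "LR Q j = (pderiv ^^ j) (LU Q)"

lemma LR_Suc: "LR Q (Suc j) = pderiv (LR Q j)" by (simp add: LR_def)

lemma LR_roots:
  assumes "j < Q"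
  shows "poly (LR Q j) 1 = 0" "poly (LR Q j) (-1) = 0"
proof -
  have U: "LU Q = [:-1,1:]^Q * [:-(-1),1:]^Q"
    unfolding LU_def power_mult_distrib[symmetric] by simp
  have "[:-1,1:]^(Q-j) dvd LR Q j" unfolding LR_def
    by (rule dvd_hpderiv_lin) (use assms U in auto)
  moreover have "[:-(-1),1:]^(Q-j) dvd LR Q j" unfolding LR_def
    by (rule dvd_hpderiv_lin) (use assms U in auto)
  moreover have "Q - j = Suc (Q - j - 1)" using assms by simp
  ultimately have "[:-1,1:] dvd LR Q j" "[:-(-1),1:] dvd LR Q j"
    by (metis dvd_mult_left power_Suc)+
  then show "poly (LR Q j) 1 = 0" "poly (LR Q j) (-1) = 0"
    by (simp_all add: poly_eq_0_iff_dvd)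
qed

lemma degree_LR: "degree (LR Q j) = 2 * Q - j"
proof -
  have "degree (LU Q) = 2 * Q" unfolding LU_def by (simp add: degree_power_eq)
  then show ?thesis unfolding LR_def
    by (induction j) (simp_all add: degree_pderiv)
qed

lemma LR_zeros:
  assumes "j \<le> Q"
  shows "\<exists>z. z 0 = -1 \<and> z (Suc j) = 1 \<and> (\<forall>i\<le>j. z i < z (Suc i)) \<and> (\<forall>i. 1 \<le> i \<and> i \<le> j \<longrightarrow> poly (LR Q j) (z i) = 0)"
  using assms
proof (induction j)
  case 0
  show ?case by (rule exI[of _ "\<lambda>i. if i = 0 then -1 else 1"]) auto
next
  case (Suc j)
  then obtain z where z: "z 0 = -1" "z (Suc j) = 1" "\<forall>i\<le>j. z i < z (Suc i)"
    "\<forall>i. 1 \<le> i \<and> i \<le> j \<longrightarrow> poly (LR Q j) (z i) = 0" by auto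
  have jQ: "j < Q" using Suc by simp
  have zz: "poly (LR Q j) (z i) = 0" if "i \<le> Suc j" for i
  proof (cases "i = 0 \<or> i = Suc j")
    case True then show ?thesis using LR_roots[OF jQ] z by auto
  next
    case False then show ?thesis using z that by auto
  qed
  have "\<forall>i\<in>{..j}. \<exists>w. z i < w \<and> w < z (Suc i) \<and> poly (LR Q (Suc j)) w = 0"
    unfolding LR_Suc using z(3) zz by (auto intro!: poly_rolle)
  then obtain w where w: "\<And>i. i \<le> j \<Longrightarrow> z i < w i \<and> w i < z (Suc i) \<and> poly (LR Q (Suc j)) (w i) = 0"
    by (metis atMost_iff)
  have mono: "z i \<le> z i'" if "i \<le> i'" "i' \<le> Suc j" for i i'
    using that
  proof (induction i' rule: dec_induct)
    case base then show ?case by simp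
  next
    case (step k)
    then have "z i \<le> z k" "k \<le> j" by simp_all
    moreover have "z k < z (Suc k)" using z(3) \<open>k \<le> j\<close> by blast
    ultimately show ?case by linarith
  qed
  define z' where "z' = (\<lambda>i. if i = 0 then -1 else if i \<le> Suc j then w (i - 1) else 1)"
  show ?case
  proof (rule exI[of _ z'], intro conjI allI impI)
    show "z' 0 = -1" by (simp add: z'_def)
    show "z' (Suc (Suc j)) = 1" by (simp add: z'_def)
  next
    fix i assume i: "i \<le> Suc j"
    show "z' i < z' (Suc i)"
    proof (cases "i = 0")
      case True then show ?thesis using w[of 0] z(1) by (simp add: z'_def)
    next
      case False
      show ?thesis
      proof (cases "i = Suc j")
        case True then show ?thesis using w[of j] z(2) by (simp add: z'_def)
      next
        case False2: False
        then have "i - 1 < j" using i False by simp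
        then show ?thesis using w[of "i-1"] w[of i] False False2 i
          by (simp add: z'_def)
      qed
    qed
  next
    fix i assume "1 \<le> i \<and> i \<le> Suc j"
    then have "i - 1 \<le> j" "i \<noteq> 0" "i \<le> Suc j" by auto
    then show "poly (LR Q (Suc j)) (z' i) = 0" using w[of "i-1"] by (simp add: z'_def)
  qed
qed



lemma poly_mult_fun: "poly (p*q) = (\<lambda>x. poly p x * poly q x)" by (rule ext) simp

lemma strict_mono_seg:
  fixes z :: "nat \<Rightarrow> real"
  assumes "\<forall>i\<le>j. z i < z (Suc i)" "i < i'" "i' \<le> Suc j"
  shows "z i < z i'"
proof -
  have "Suc i \<le> i'" using assms by simp
  then show ?thesis using assms(3)
  proof (induction i' rule: dec_induct)
    case base then show ?case using assms(1) by simp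
  next
    case (step k)
    then have "z i < z k" "k \<le> j" by simp_all
    moreover have "z k < z (Suc k)" using assms(1) \<open>k \<le> j\<close> by blast
    ultimately show ?case by linarith
  qed
qed

lemma gl_nodes_LR: "gl_nodes Q = {x. poly (LR Q Q) x = 0}"
  unfolding gl_nodes_def legendre_poly_def LR_def LU_def by simp

lemma LR_nonzero: "1 \<le> Q \<Longrightarrow> LR Q Q \<noteq> 0"
  using degree_LR[of Q Q] by auto

lemma gl_nodes_props:
  assumes "1 \<le> Q"
  shows "finite (gl_nodes Q)" "card (gl_nodes Q) = Q" "gl_nodes Q \<subseteq> {-1<..<1}"
proof -
  obtain z where z: "z 0 = -1" "z (Suc Q) = 1" "\<forall>i\<le>Q. z i < z (Suc i)"
    "\<forall>i. 1 \<le> i \<and> i \<le> Q \<longrightarrow> poly (LR Q Q) (z i) = 0"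
    using LR_zeros[of Q Q] by auto
  define Z where "Z = z ` {1..Q}"
  have fin: "finite (gl_nodes Q)" unfolding gl_nodes_LR
    using poly_roots_finite[OF LR_nonzero[OF assms]] .
  have cle: "card (gl_nodes Q) \<le> Q" unfolding gl_nodes_LR
    using card_poly_roots_bound[OF LR_nonzero[OF assms]] degree_LR[of Q Q] by simp
  have inj: "inj_on z {1..Q}"
  proof (rule inj_onI)
    fix x y assume "x \<in> {1..Q}" "y \<in> {1..Q}" "z x = z y"
    then show "x = y" using strict_mono_seg[OF z(3), of x y] strict_mono_seg[OF z(3), of y x]
      by (metis atLeastAtMost_iff le_SucI linorder_neqE_nat order_less_irrefl)
  qed
  have cZ: "card Z = Q" unfolding Z_def using card_image[OF inj] by simp
  have sub: "Z \<subseteq> gl_nodes Q" unfolding Z_def gl_nodes_LR using z(4) by auto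
  have eq: "Z = gl_nodes Q"
    using card_subset_eq[OF fin sub] cZ cle card_mono[OF fin sub] by simp
  show "finite (gl_nodes Q)" by (rule fin)
  show "card (gl_nodes Q) = Q" using eq cZ by simp
  show "gl_nodes Q \<subseteq> {-1<..<1}"
  proof
    fix x assume "x \<in> gl_nodes Q"
    then obtain i where i: "i \<in> {1..Q}" "x = z i" using eq unfolding Z_def by (metis imageE)
    have "z 0 < z i" "z i < z (Suc Q)" using strict_mono_seg[OF z(3)] i by auto
    then show "x \<in> {-1<..<1}" using z i by simp
  qed
qed

lemma LR_orth:
  assumes "m \<le> Q" "degree s < m"
  shows "integral {-1..1} (poly (LR Q m * s)) = 0"
  using assms
proof (induction m arbitrary: s)
  case 0 then show ?case by simp
next
  case (Suc m)
  have mQ: "m < Q" using Suc by simp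
  have "integral {-1..1} (poly (LR Q (Suc m) * s)) =
     poly (LR Q m * s) 1 - poly (LR Q m * s) (-1) - integral {-1..1} (poly (LR Q m * pderiv s))"
    unfolding LR_Suc by (rule by_parts) simp
  moreover have "poly (LR Q m) 1 = 0" "poly (LR Q m) (-1) = 0"
    using LR_roots[OF mQ] by simp_all
  moreover have "integral {-1..1} (poly (LR Q m * pderiv s)) = 0"
  proof (cases "m = 0")
    case True
    then have "pderiv s = 0" using Suc.prems by (simp add: pderiv_eq_0_iff)
    moreover have "poly (0::real poly) = (\<lambda>_. 0)" by (rule ext) simp
    ultimately show ?thesis by simp
  next
    case False
    then have "degree (pderiv s) < m" using Suc.prems by (simp add: degree_pderiv)
    then show ?thesis using Suc.IH[of "pderiv s"] mQ by (simp add: poly_mult_fun)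
  qed
  ultimately show ?case by (simp add: poly_mult_fun)
qed



lemma integral_subst_lin:
  fixes q :: "real poly" and a b :: real
  assumes "a < b"
  shows "integral {a..b} (\<lambda>x. poly q (poly [:-(a+b)/(b-a), 2/(b-a):] x)) = (b-a)/2 * integral {-1..1} (poly q)"
proof -
  define il where "il = [:-(a+b)/(b-a), 2/(b-a):]"
  obtain F where F: "pderiv F = q" using pint_ex by blast
  define G where "G = pcompose F il"
  have dG: "pderiv G = pcompose q il * [:2/(b-a):]"
    unfolding G_def pderiv_pcompose F il_def by (simp add: pderiv_pCons)
  have ne: "b - a \<noteq> 0" using assms by simp
  have ila: "poly il a = -1" "poly il b = 1" unfolding il_def using ne
    by (simp_all add: divide_simps)
  have "integral {a..b} (poly (pderiv G)) = poly F 1 - poly F (-1)"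
    using poly_integral[of a b G] assms ila by (simp add: G_def poly_pcompose)
  also have "\<dots> = integral {-1..1} (poly q)" using poly_integral[of "-1" 1 F] F by simp
  finally have 1: "integral {a..b} (poly (pderiv G)) = integral {-1..1} (poly q)" .
  have "poly (pderiv G) = (\<lambda>x. (2/(b-a)) * poly q (poly il x))"
    unfolding dG by (rule ext) (simp add: poly_pcompose)
  then have "integral {a..b} (poly (pderiv G)) = (2/(b-a)) * integral {a..b} (\<lambda>x. poly q (poly il x))"
    by simp
  then show ?thesis using 1 assms unfolding il_def by (simp add: field_simps)
qed



definition lagr :: "real set \<Rightarrow> real \<Rightarrow> real poly" where
  "lagr N c = smult (1 / (\<Prod>d\<in>N-{c}. (c - d))) (\<Prod>d\<in>N-{c}. [:-d, 1:])"

lemma poly_lagr: "poly (lagr N c) y = (\<Prod>d\<in>N-{c}. (y - d) / (c - d))"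
  unfolding lagr_def by (simp add: poly_prod prod_dividef)

lemma degree_lagr: "finite N \<Longrightarrow> c \<in> N \<Longrightarrow> degree (lagr N c) \<le> card N - 1"
proof -
  assume fin: "finite N" and cN: "c \<in> N"
  have "degree (lagr N c) \<le> degree (\<Prod>d\<in>N-{c}. [:-d, 1:])"
    unfolding lagr_def by (rule degree_smult_le)
  also have "\<dots> \<le> sum (degree \<circ> (\<lambda>d. [:-d, 1:])) (N-{c})"
    by (rule degree_prod_sum_le) (use fin in simp)
  also have "\<dots> = card (N - {c})" by simp
  also have "\<dots> \<le> card N - 1" using cN by (simp add: card_Diff_singleton_if)
  finally show ?thesis .
qed

lemma lagr_nodes:
  assumes "finite N" "c \<in> N" "c' \<in> N"
  shows "poly (lagr N c') c = (if c = c' then 1 else 0)"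
proof (cases "c = c'")
  case True
  have "(\<Prod>d\<in>N-{c}. (c - d) / (c - d)) = 1"
    by (rule prod.neutral) simp
  then show ?thesis using True by (simp add: poly_lagr)
next
  case False
  then have "c \<in> N - {c'}" using assms by simp
  then have "(\<Prod>d\<in>N-{c'}. (c - d) / (c' - d)) = 0"
    using assms by (intro prod_zero) auto
  then show ?thesis using False by (simp add: poly_lagr)
qed

lemma gl_weight_node:
  assumes "a < b" "c \<in> gl_nodes Q"
  shows "gl_weight Q a b (((b-a)*c + a + b)/2) = integral {a..b} (\<lambda>x. poly (lagr (gl_nodes Q) c) (poly [:-(a+b)/(b-a), 2/(b-a):] x))"
proof -
  have ne: "b - a \<noteq> 0" using assms by simp
  have xi: "(2 * (((b-a)*c + a + b)/2) - (a + b)) / (b - a) = c"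
    using ne by (simp add: field_simps)
  have eq: "(\<Prod>d\<in>gl_nodes Q - {c}. (2 * x - (b - a) * d - (a + b)) / (2 * (((b-a)*c + a + b)/2) - (b - a) * d - (a + b)))
     = poly (lagr (gl_nodes Q) c) (poly [:-(a+b)/(b-a), 2/(b-a):] x)" for x
    unfolding poly_lagr
  proof (rule prod.cong[OF refl])
    fix d assume d: "d \<in> gl_nodes Q - {c}"
    then have "c - d \<noteq> 0" by auto
    then show "(2 * x - (b - a) * d - (a + b)) / (2 * (((b-a)*c + a + b)/2) - (b - a) * d - (a + b))
      = (poly [:-(a+b)/(b-a), 2/(b-a):] x - d) / (c - d)"
    proof -
      have y: "poly [:-(a+b)/(b-a), 2/(b-a):] x = (2*x - (a+b))/(b-a)"
        by (simp add: add_divide_distrib[symmetric] algebra_simps)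
      have n: "2 * x - (b - a) * d - (a + b) = (b - a) * (poly [:-(a+b)/(b-a), 2/(b-a):] x - d)"
        proof -
          have "(b-a) * ((2*x - (a+b))/(b-a)) = 2*x-(a+b)" using ne by simp
          then show ?thesis unfolding y right_diff_distrib by linarith
        qed
      have m: "2 * (((b-a)*c + a + b)/2) - (b - a) * d - (a + b) = (b - a) * (c - d)"
        by (simp add: field_simps)
      show ?thesis unfolding n m using ne by simp
    qed
  qed
  show ?thesis unfolding gl_weight_def Let_def xi using assms eq by simp
qed



lemma vanish_orth:
  fixes q :: "real poly"
  assumes Q: "1 \<le> Q" and deg: "degree q \<le> 2*Q-1" and van: "\<And>c. c \<in> gl_nodes Q \<Longrightarrow> poly q c = 0"
  shows "integral {-1..1} (poly q) = 0"
proof -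
  define P where "P = LR Q Q"
  have P0: "P \<noteq> 0" unfolding P_def using LR_nonzero[OF Q] .
  have dP: "degree P = Q" unfolding P_def using degree_LR[of Q Q] by simp
  have roots: "poly P c = 0" if "c \<in> gl_nodes Q" for c using that unfolding P_def gl_nodes_LR by simp
  have mod0: "q mod P = 0"
  proof (rule ccontr)
    assume nz: "q mod P \<noteq> 0"
    have "poly (q mod P) c = 0" if "c \<in> gl_nodes Q" for c
    proof -
      have "q = P * (q div P) + q mod P" by simp
      then have "poly q c = poly P c * poly (q div P) c + poly (q mod P) c"
        by (metis poly_add poly_mult)
      then show ?thesis using van[OF that] roots[OF that] by simp
    qed
    then have sub: "gl_nodes Q \<subseteq> {x. poly (q mod P) x = 0}" by auto
    have "Q = card (gl_nodes Q)" using gl_nodes_props[OF Q] by simp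
    also have "\<dots> \<le> card {x. poly (q mod P) x = 0}"
      by (rule card_mono[OF poly_roots_finite[OF nz] sub])
    also have "\<dots> \<le> degree (q mod P)" by (rule card_poly_roots_bound[OF nz])
    also have "\<dots> < Q" using degree_mod_less'[OF P0 nz] dP by simp
    finally show False by simp
  qed
  then have qe: "q = P * (q div P)" by (metis add.right_neutral div_mult_mod_eq mult.commute)
  show ?thesis
  proof (cases "q div P = 0")
    case True
    then have "q = 0" using qe by simp
    moreover have "poly (0::real poly) = (\<lambda>_. 0)" by (rule ext) simp
    ultimately show ?thesis by simp
  next
    case False
    then have "degree q = Q + degree (q div P)" using qe degree_mult_eq[OF P0 False] dP by metis
    then have "degree (q div P) < Q" using deg Q by simp
    then have "integral {-1..1} (poly (P * (q div P))) = 0" unfolding P_def by (rule LR_orth[OF order_refl])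
    then show ?thesis using qe by simp
  qed
qed

lemma gl_exact:
  fixes p :: "real poly"
  assumes Q: "1 \<le> Q" and ab: "a < b" and deg: "degree p \<le> 2*Q-1"
  shows "(\<Sum>c\<in>gl_nodes Q. gl_weight Q a b (((b-a)*c+a+b)/2) * poly p (((b-a)*c+a+b)/2)) = integral {a..b} (poly p)"
proof -
  define N where "N = gl_nodes Q"
  define il where "il = [:-(a+b)/(b-a), 2/(b-a):]"
  define lin where "lin = [:(a+b)/2, (b-a)/2:]"
  define r where "r = pcompose p lin"
  define I where "I = (\<Sum>c\<in>N. smult (poly r c) (lagr N c))"
  have fin: "finite N" and cN: "card N = Q" unfolding N_def using gl_nodes_props[OF Q] by auto
  have ne: "b - a \<noteq> 0" using ab by simp
  have plin: "poly lin c = ((b-a)*c+a+b)/2" for c unfolding lin_def by (simp add: field_simps)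
  have pr: "poly r c = poly p (((b-a)*c+a+b)/2)" for c unfolding r_def poly_pcompose plin ..
  have linil: "poly lin (poly il x) = x" for x
  proof -
    have "poly il x = (2*x - (a+b))/(b-a)" unfolding il_def
      by (simp add: add_divide_distrib[symmetric] algebra_simps)
    moreover have "(b-a) * ((2*x - (a+b))/(b-a)) = 2*x-(a+b)" using ne by simp
    ultimately show ?thesis unfolding plin by (simp add: algebra_simps)
  qed
  have intg: "(\<lambda>x. k * poly s (poly il x)) integrable_on {a..b}" for s k
  proof -
    have "(\<lambda>x. k * poly s (poly il x)) = poly (smult k (pcompose s il))"
      by (rule ext) (simp add: poly_pcompose)
    then show ?thesis using poly_integrable by metis
  qed
  have "(\<Sum>c\<in>N. gl_weight Q a b (((b-a)*c+a+b)/2) * poly p (((b-a)*c+a+b)/2))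
      = (\<Sum>c\<in>N. integral {a..b} (\<lambda>x. poly r c * poly (lagr N c) (poly il x)))"
  proof (rule sum.cong[OF refl])
    fix c assume c: "c \<in> N"
    show "gl_weight Q a b (((b-a)*c+a+b)/2) * poly p (((b-a)*c+a+b)/2)
      = integral {a..b} (\<lambda>x. poly r c * poly (lagr N c) (poly il x))"
      unfolding gl_weight_node[OF ab c[unfolded N_def]] pr N_def il_def by simp
  qed
  also have "\<dots> = integral {a..b} (\<lambda>x. \<Sum>c\<in>N. poly r c * poly (lagr N c) (poly il x))"
    by (rule integral_sum[symmetric, OF fin]) (rule intg)
  also have "\<dots> = integral {a..b} (\<lambda>x. poly I (poly il x))"
    unfolding I_def by (simp add: poly_sum)
  also have "\<dots> = (b-a)/2 * integral {-1..1} (poly I)"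
    unfolding il_def by (rule integral_subst_lin[OF ab])
  finally have L: "(\<Sum>c\<in>N. gl_weight Q a b (((b-a)*c+a+b)/2) * poly p (((b-a)*c+a+b)/2)) = (b-a)/2 * integral {-1..1} (poly I)" .
  have "integral {a..b} (poly p) = integral {a..b} (\<lambda>x. poly r (poly il x))"
    unfolding r_def poly_pcompose linil ..
  also have "\<dots> = (b-a)/2 * integral {-1..1} (poly r)"
    unfolding il_def by (rule integral_subst_lin[OF ab])
  finally have R: "integral {a..b} (poly p) = (b-a)/2 * integral {-1..1} (poly r)" .
  have dlin: "degree lin = 1" unfolding lin_def using ne by simp
  have dr: "degree r \<le> 2*Q-1" unfolding r_def degree_pcompose dlin using deg by simp
  have dI: "degree I \<le> 2*Q-1"
  proof -
    have "degree I \<le> Q - 1" unfolding I_def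
    proof (rule degree_sum_le[OF fin])
      fix c assume "c \<in> N"
      then show "degree (smult (poly r c) (lagr N c)) \<le> Q - 1"
        using degree_lagr[OF fin, of c] cN degree_smult_le[of "poly r c" "lagr N c"] by simp
    qed
    then show ?thesis by simp
  qed
  have dq: "degree (r - I) \<le> 2*Q-1" using degree_diff_le_max[of r I] dr dI by simp
  have van: "poly (r - I) c = 0" if "c \<in> gl_nodes Q" for c
  proof -
    have c: "c \<in> N" using that N_def by simp
    have "poly I c = (\<Sum>c'\<in>N. poly r c' * (if c = c' then 1 else 0))"
      unfolding I_def poly_sum poly_smult using lagr_nodes[OF fin c] by simp
    also have "\<dots> = (\<Sum>c'\<in>N. if c' = c then poly r c' else 0)"
      by (rule sum.cong) auto
    also have "\<dots> = poly r c" using fin c by (simp add: sum.delta')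
    finally show ?thesis by simp
  qed
  have "integral {-1..1} (poly (r - I)) = 0" by (rule vanish_orth[OF Q dq van])
  moreover have "integral {-1..1} (poly (r - I)) = integral {-1..1} (poly r) - integral {-1..1} (poly I)"
  proof -
    have "poly (r - I) = (\<lambda>x. poly r x - poly I x)" by (rule ext) simp
    then show ?thesis using integral_diff[OF poly_integrable poly_integrable] by simp
  qed
  ultimately show ?thesis using L R N_def by simp
qed



definition tau :: "real \<Rightarrow> real \<Rightarrow> real \<Rightarrow> real" where
  "tau T s c = ((T-s)*c+s+T)/2"

lemma w_support:
  assumes "gl_weight Q s T t \<noteq> 0"
  shows "s < T \<and> (\<exists>c\<in>gl_nodes Q. t = tau T s c)"
proof -
  define \<xi> where "\<xi> = (2 * t - (s + T)) / (T - s)"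
  have h: "s < T \<and> \<xi> \<in> gl_nodes Q" using assms unfolding gl_weight_def Let_def \<xi>_def
    by (auto split: if_splits)
  then have "t = tau T s \<xi>" unfolding tau_def \<xi>_def by (simp add: field_simps)
  then show ?thesis using h by blast
qed

lemma tau_range:
  assumes "1 \<le> Q" "c \<in> gl_nodes Q" "s < T"
  shows "s < tau T s c" "tau T s c < T"
proof -
  have "-1 < c" "c < 1" using gl_nodes_props(3)[OF assms(1)] assms(2) by auto
  moreover have "0 < T - s" using assms(3) by simp
  ultimately have "(T-s)*(-1) < (T-s)*c" "(T-s)*c < (T-s)*1" by (simp_all only: mult_strict_left_mono)
  then show "s < tau T s c" "tau T s c < T" unfolding tau_def by (simp_all add: field_simps)
qed

fun Rset :: "real \<Rightarrow> nat \<Rightarrow> nat \<Rightarrow> real set" where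
  "Rset T Q 0 = {0}"
| "Rset T Q (Suc n) = (\<Union>s\<in>Rset T Q n. tau T s ` gl_nodes Q)"

lemma Rset_finite: "1 \<le> Q \<Longrightarrow> finite (Rset T Q n)"
  by (induction n) (auto simp: gl_nodes_props(1))

lemma Rset_range: "1 \<le> Q \<Longrightarrow> 0 \<le> T \<Longrightarrow> Rset T Q n \<subseteq> {0..T}"
proof (induction n)
  case 0 then show ?case by simp
next
  case (Suc n)
  show ?case
  proof
    fix t assume "t \<in> Rset T Q (Suc n)"
    then obtain s c where s: "s \<in> Rset T Q n" "c \<in> gl_nodes Q" "t = tau T s c" by auto
    then have s0: "0 \<le> s" "s \<le> T" using Suc by auto
    show "t \<in> {0..T}"
    proof (cases "s = T")
      case True then show ?thesis using s s0 by (simp add: tau_def field_simps)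
    next
      case False
      then show ?thesis using tau_range[OF Suc.prems(1) s(2), of s T] s s0 by auto
    qed
  qed
qed

lemma qbar_support: "1 \<le> Q \<Longrightarrow> qbar T Q n t \<noteq> 0 \<Longrightarrow> t \<in> Rset T Q n"
proof (induction n arbitrary: t)
  case 0 then show ?case by (simp split: if_splits)
next
  case (Suc n)
  then have "supp_sum {0..t} (\<lambda>s. qbar T Q n s * gl_weight Q s T t) \<noteq> 0" by simp
  then obtain s where "qbar T Q n s * gl_weight Q s T t \<noteq> 0"
    unfolding supp_sum_def by (metis (mono_tags, lifting) mem_Collect_eq sum.neutral)
  then have s: "qbar T Q n s \<noteq> 0" "gl_weight Q s T t \<noteq> 0" by auto
  then have "s \<in> Rset T Q n" using Suc by blast
  moreover obtain c where "c \<in> gl_nodes Q" "t = tau T s c" using w_support[OF s(2)] by blast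
  ultimately show ?case by auto
qed

lemma qbar_Suc_sum:
  assumes Q: "1 \<le> Q" and T: "0 \<le> T"
  shows "qbar T Q (Suc n) t = (\<Sum>s\<in>Rset T Q n. qbar T Q n s * gl_weight Q s T t)"
proof -
  let ?f = "\<lambda>s. qbar T Q n s * gl_weight Q s T t"
  have sub: "{x\<in>{0..t}. ?f x \<noteq> 0} \<subseteq> Rset T Q n" using qbar_support[OF Q] by auto
  have z: "\<forall>x\<in>Rset T Q n - {x\<in>{0..t}. ?f x \<noteq> 0}. ?f x = 0"
  proof
    fix x assume x: "x \<in> Rset T Q n - {x\<in>{0..t}. ?f x \<noteq> 0}"
    show "?f x = 0"
    proof (rule ccontr)
      assume nz: "?f x \<noteq> 0"
      then have w: "gl_weight Q x T t \<noteq> 0" by auto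
      obtain c where c: "c \<in> gl_nodes Q" "t = tau T x c" using w_support[OF w] by blast
      have "x < t" using tau_range[OF Q c(1)] w_support[OF w] c by auto
      moreover have "0 \<le> x" using Rset_range[OF Q T, of n] x by auto
      ultimately show False using x nz by auto
    qed
  qed
  have "qbar T Q (Suc n) t = sum ?f {x\<in>{0..t}. ?f x \<noteq> 0}" by (simp add: supp_sum_def)
  also have "\<dots> = sum ?f (Rset T Q n)" by (rule sum.mono_neutral_left[OF Rset_finite[OF Q] sub z])
  finally show ?thesis .
qed



lemma inner_sum:
  assumes Q: "1 \<le> Q" and T: "0 \<le> T" and s: "s \<in> Rset T Q n" and deg: "degree p \<le> 2*Q-1"
  shows "(\<Sum>t\<in>Rset T Q (Suc n). gl_weight Q s T t * poly p t) = integral {s..T} (poly p)"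
proof (cases "s < T")
  case False
  then have sT: "s = T" using Rset_range[OF Q T, of n] s by force
  have "gl_weight Q s T t = 0" for t using w_support[of Q s T t] sT by auto
  then show ?thesis using sT by simp
next
  case True
  let ?g = "\<lambda>t. gl_weight Q s T t * poly p t"
  have sub: "tau T s ` gl_nodes Q \<subseteq> Rset T Q (Suc n)" using s by auto
  have z: "\<forall>x\<in>Rset T Q (Suc n) - tau T s ` gl_nodes Q. ?g x = 0"
  proof
    fix x assume x: "x \<in> Rset T Q (Suc n) - tau T s ` gl_nodes Q"
    have "gl_weight Q s T x = 0"
    proof (rule ccontr)
      assume "gl_weight Q s T x \<noteq> 0"
      then show False using w_support[of Q s T x] x by auto
    qed
    then show "?g x = 0" by simp
  qed
  have "(\<Sum>t\<in>Rset T Q (Suc n). ?g t) = (\<Sum>t\<in>tau T s ` gl_nodes Q. ?g t)"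
    by (rule sum.mono_neutral_right[OF Rset_finite[OF Q] sub z])
  also have "\<dots> = (\<Sum>c\<in>gl_nodes Q. ?g (tau T s c))"
  proof (rule sum.reindex[unfolded comp_def])
    show "inj_on (tau T s) (gl_nodes Q)" unfolding tau_def using True by (auto intro!: inj_onI)
  qed
  also have "\<dots> = integral {s..T} (poly p)"
    unfolding tau_def by (rule gl_exact[OF Q True deg])
  finally show ?thesis .
qed

definition gm :: "real \<Rightarrow> nat \<Rightarrow> real poly" where
  "gm T m = smult (1 / fact m) ([:T, -1:] ^ m)"

lemma poly_gm: "poly (gm T m) t = (T - t)^m / fact m"
  unfolding gm_def by simp

lemma degree_gm: "degree (gm T m) \<le> m"
proof -
  have "degree (gm T m) \<le> degree ([:T, -1:] ^ m)" unfolding gm_def by (rule degree_smult_le)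
  also have "\<dots> \<le> degree [:T, -1::real:] * m" by (rule degree_power_le)
  finally show ?thesis by simp
qed

lemma integral_gm:
  assumes "s \<le> T"
  shows "integral {s..T} (poly (gm T m)) = poly (gm T (Suc m)) s"
proof -
  define F where "F = smult (- 1 / fact (Suc m)) ([:T, -1::real:] ^ Suc m)"
  have "pderiv F = gm T m"
  proof -
    have "fact m + fact m * real m = fact m * (1 + real m)" by (simp add: algebra_simps)
    moreover have "(fact m :: real) > 0" by simp
    ultimately have h: "(1 + real m) / (fact m + fact m * real m) = 1 / fact m"
      by simp
    show ?thesis unfolding F_def gm_def pderiv_smult pderiv_power_Suc
      by (simp add: pderiv_pCons field_simps) (simp only: h)
  qed
  then have "integral {s..T} (poly (gm T m)) = poly F T - poly F s"
    using poly_integral[OF assms, of F] by simp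
  also have "\<dots> = poly (gm T (Suc m)) s" unfolding F_def gm_def by simp
  finally show ?thesis .
qed



lemma iter:
  assumes Q: "1 \<le> Q" and T: "0 \<le> T"
  shows "n + m \<le> 2*Q \<Longrightarrow> (\<Sum>t\<in>Rset T Q n. qbar T Q n t * poly (gm T m) t) = T^(n+m)/fact(n+m)"
proof (induction n arbitrary: m)
  case 0 then show ?case by (simp add: poly_gm)
next
  case (Suc n)
  let ?w = "\<lambda>s t. gl_weight Q s T t"
  have deg: "degree (gm T m) \<le> 2*Q-1" using degree_gm[of T m] Suc.prems by simp
  have "(\<Sum>t\<in>Rset T Q (Suc n). qbar T Q (Suc n) t * poly (gm T m) t)
      = (\<Sum>t\<in>Rset T Q (Suc n). \<Sum>s\<in>Rset T Q n. qbar T Q n s * (?w s t * poly (gm T m) t))"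
    unfolding qbar_Suc_sum[OF Q T] sum_distrib_right by (simp add: mult.assoc)
  also have "\<dots> = (\<Sum>s\<in>Rset T Q n. \<Sum>t\<in>Rset T Q (Suc n). qbar T Q n s * (?w s t * poly (gm T m) t))"
    by (rule sum.swap)
  also have "\<dots> = (\<Sum>s\<in>Rset T Q n. qbar T Q n s * (\<Sum>t\<in>Rset T Q (Suc n). ?w s t * poly (gm T m) t))"
    by (simp add: sum_distrib_left)
  also have "\<dots> = (\<Sum>s\<in>Rset T Q n. qbar T Q n s * poly (gm T (Suc m)) s)"
  proof (rule sum.cong[OF refl])
    fix s assume s: "s \<in> Rset T Q n"
    have "s \<le> T" using Rset_range[OF Q T, of n] s by auto
    then show "qbar T Q n s * (\<Sum>t\<in>Rset T Q (Suc n). ?w s t * poly (gm T m) t) = qbar T Q n s * poly (gm T (Suc m)) s"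
      using inner_sum[OF Q T s deg] integral_gm by simp
  qed
  also have "\<dots> = T^(n + Suc m)/fact(n + Suc m)" using Suc.IH[of "Suc m"] Suc.prems by simp
  finally show ?case by simp
qed

theorem lemma3p8:
  fixes T :: real and M :: "'a measure" and W :: "real \<Rightarrow> 'a \<Rightarrow> real ^ 'd"
    and Q k :: nat
  assumes "0 < T"
    and "prob_space M"
    and "std_brownian_motion M T W"
    and "1 \<le> Q"
    and "k \<le> 2 * Q - 1"
  shows "gl_seminorm M W T k Q (\<lambda>t x. 1) = ereal (T ^ k / fact k)"
proof -
  have Q: "1 \<le> Q" and T: "0 \<le> T" using assms by auto
  have int1: "(\<integral>\<^sup>+ \<omega>. ennreal ((1::real)\<^sup>2) \<partial>M) = 1"
    using prob_space.emeasure_space_1[OF assms(2)] by simp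
  have sq1: "sqrt_ennreal 1 = 1" unfolding sqrt_ennreal_def by simp
  have L: "L2_sup M W T (\<lambda>t x. 1) t = 1" if t: "t \<in> {0..T}" for t
  proof -
    have "L2_sup M W T (\<lambda>t x. 1) t = (SUP s\<in>{t..T}. SUP u\<in>{0..s}. SUP z\<in>(UNIV :: (real ^ 'd) set). (1::ennreal))"
      unfolding L2_sup_def int1 sq1 ..
    also have "\<dots> = (SUP s\<in>{t..T}. (1::ennreal))"
    proof (rule SUP_cong[OF refl])
      fix s assume "s \<in> {t..T}"
      then have "{0..s} \<noteq> {}" using t by auto
      then show "(SUP u\<in>{0..s}. SUP z\<in>(UNIV :: (real ^ 'd) set). (1::ennreal)) = 1" by simp
    qed
    also have "\<dots> = 1" using t by simp
    finally show ?thesis .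
  qed
  let ?f = "\<lambda>t. ereal (qbar T Q k t) * enn2ereal (L2_sup M W T (\<lambda>t x. 1) t)"
  have e1: "enn2ereal 1 = 1" by (simp add: one_ennreal.rep_eq)
  have S: "{x\<in>{0..T}. ?f x \<noteq> 0} = {x\<in>{0..T}. qbar T Q k x \<noteq> 0}"
    using L e1 by auto
  have "gl_seminorm M W T k Q (\<lambda>t x. 1) = sum ?f {x\<in>{0..T}. qbar T Q k x \<noteq> 0}"
    unfolding gl_seminorm_def supp_sum_def S ..
  also have "\<dots> = (\<Sum>t\<in>{x\<in>{0..T}. qbar T Q k x \<noteq> 0}. ereal (qbar T Q k t))"
    by (rule sum.cong[OF refl]) (simp add: L e1)
  also have "\<dots> = ereal (\<Sum>t\<in>{x\<in>{0..T}. qbar T Q k x \<noteq> 0}. qbar T Q k t)" by simp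
  also have "(\<Sum>t\<in>{x\<in>{0..T}. qbar T Q k x \<noteq> 0}. qbar T Q k t) = (\<Sum>t\<in>Rset T Q k. qbar T Q k t)"
    by (rule sum.mono_neutral_left[OF Rset_finite[OF Q]]) (use qbar_support[OF Q] Rset_range[OF Q T, of k] in auto)
  also have "\<dots> = (\<Sum>t\<in>Rset T Q k. qbar T Q k t * poly (gm T 0) t)" by (simp add: poly_gm)
  also have "\<dots> = T^k / fact k" using iter[OF Q T, of k 0] assms(5) by simp
  finally show ?thesis .
qed


end
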